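(* Let $n, r$ be positive integers. Then $$m\big(L(K_n),r\big)=\begin{cases}\left\lfloor\dfrac{(r+2)^2}{8}\right\rfloor, & \text{if } n\geqslant\lceil r/2\rceil+2;\\[2mm] \dbinom{n}{2}, & \text{otherwise.}\end{cases}$$
   Context: All graphs are finite, simple and undirected. For a nonnegative integer $r$ and a graph $G$, the $r$-neighbor bootstrap percolation process on $G$ starts with a set $A_0\subseteq V(G)$ of initially active vertices, and for $i\geqslant 1$, $A_i=A_{i-1}\cup\{v\in V(G) : |N(v)\cap A_{i-1}|\geqslant r\}$, where $N(v)$ is the set of neighbors of $v$. The set $A_0$ is a percolating set if $\bigcup_{i\geqslant 0}A_i=V(G)$. $m(G,r)$ denotes the minimum size of a percolating set. $L(G)$ is the line graph of $G$: its vertex set is $E(G)$ and two vertices are adjacent iff the corresponding edges share an endpoint. $K_n$ is the complete graph on $n$ vertices. *)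

theory Defs
  imports Complex_Main
begin

text \<open>A finite simple graph is given by a vertex set V and a symmetric irreflexive
adjacency relation adj. Neighbours of v: the u in V with adj v u.\<close>

definition bp_step :: "'a set \<Rightarrow> ('a \<Rightarrow> 'a \<Rightarrow> bool) \<Rightarrow> nat \<Rightarrow> 'a set \<Rightarrow> 'a set" where
  "bp_step V adj r A = A \<union> {v \<in> V. card {u \<in> V. adj v u \<and> u \<in> A} \<ge> r}"

definition bp_closure :: "'a set \<Rightarrow> ('a \<Rightarrow> 'a \<Rightarrow> bool) \<Rightarrow> nat \<Rightarrow> 'a set \<Rightarrow> 'a set" where
  "bp_closure V adj r A0 = (\<Union>i. (bp_step V adj r ^^ i) A0)"

definition percolating :: "'a set \<Rightarrow> ('a \<Rightarrow> 'a \<Rightarrow> bool) \<Rightarrow> nat \<Rightarrow> 'a set \<Rightarrow> bool" where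
  "percolating V adj r A0 \<longleftrightarrow> A0 \<subseteq> V \<and> bp_closure V adj r A0 = V"

definition min_perc :: "'a set \<Rightarrow> ('a \<Rightarrow> 'a \<Rightarrow> bool) \<Rightarrow> nat \<Rightarrow> nat" where
  "min_perc V adj r = (LEAST k. \<exists>A. percolating V adj r A \<and> card A = k)"

definition Kn_edges :: "nat \<Rightarrow> nat set set" where
  "Kn_edges n = {e. e \<subseteq> {0..<n} \<and> card e = 2}"

definition line_adj :: "'a set \<Rightarrow> 'a set \<Rightarrow> bool" where
  "line_adj e f \<longleftrightarrow> e \<noteq> f \<and> e \<inter> f \<noteq> {}"

end

theory Submission
  imports Defs
begin


definition stage :: "nat \<Rightarrow> nat \<Rightarrow> nat set set \<Rightarrow> nat \<Rightarrow> nat set set" where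
  "stage n r A t = (bp_step (Kn_edges n) line_adj r ^^ t) A"

lemma finite_Kn: "finite (Kn_edges n)"
proof -
  have "Kn_edges n \<subseteq> Pow {0..<n}" unfolding Kn_edges_def by auto
  then show ?thesis by (rule finite_subset) simp
qed

lemma Kn_edges_iff: "e \<in> Kn_edges n \<longleftrightarrow> (\<exists>x y. x \<noteq> y \<and> x < n \<and> y < n \<and> e = {x,y})"
  unfolding Kn_edges_def by (auto simp: card_2_iff) blast

lemma pair_in_Kn[simp]: "{x,y} \<in> Kn_edges n \<longleftrightarrow> x \<noteq> y \<and> x < n \<and> y < n"
  unfolding Kn_edges_def by (auto simp: card_2_iff doubleton_eq_iff)

lemma stage_0[simp]: "stage n r A 0 = A" by (simp add: stage_def)

lemma stage_Suc: "stage n r A (Suc t) = bp_step (Kn_edges n) line_adj r (stage n r A t)"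
  by (simp add: stage_def)

lemma stage_mono_Suc: "stage n r A t \<subseteq> stage n r A (Suc t)"
  by (auto simp: stage_Suc bp_step_def)

lemma stage_mono: "t \<le> t' \<Longrightarrow> stage n r A t \<subseteq> stage n r A t'"
  using lift_Suc_mono_le[of "stage n r A", OF stage_mono_Suc] by blast

lemma stage_sub: "A \<subseteq> Kn_edges n \<Longrightarrow> stage n r A t \<subseteq> Kn_edges n"
  by (induction t) (auto simp: stage_Suc bp_step_def)

lemma closure_stage: "bp_closure (Kn_edges n) line_adj r A = (\<Union>t. stage n r A t)"
  by (simp add: bp_closure_def stage_def)

lemma closure_step:
  assumes e: "e \<in> Kn_edges n"
    and c: "r \<le> card {f \<in> Kn_edges n. line_adj e f \<and> f \<in> bp_closure (Kn_edges n) line_adj r A}"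
  shows "e \<in> bp_closure (Kn_edges n) line_adj r A"
proof -
  let ?cl = "bp_closure (Kn_edges n) line_adj r A"
  define S where "S = {f \<in> Kn_edges n. line_adj e f \<and> f \<in> ?cl}"
  have fS: "finite S" unfolding S_def using finite_Kn by auto
  have "\<forall>f\<in>S. \<exists>t. f \<in> stage n r A t" unfolding S_def closure_stage by auto
  then obtain tf where tf: "\<And>f. f \<in> S \<Longrightarrow> f \<in> stage n r A (tf f)" by metis
  define T where "T = Max (insert 0 (tf ` S))"
  have "\<And>f. f \<in> S \<Longrightarrow> tf f \<le> T" unfolding T_def using fS by (auto intro: Max_ge)
  then have sub: "S \<subseteq> stage n r A T" using tf stage_mono by blast
  have "S \<subseteq> {f \<in> Kn_edges n. line_adj e f \<and> f \<in> stage n r A T}" using sub unfolding S_def by auto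
  then have "card S \<le> card {f \<in> Kn_edges n. line_adj e f \<and> f \<in> stage n r A T}"
    by (intro card_mono) (auto intro: finite_subset[OF _ finite_Kn])
  with c have "r \<le> card {f \<in> Kn_edges n. line_adj e f \<and> f \<in> stage n r A T}" unfolding S_def by simp
  then have "e \<in> stage n r A (Suc T)" using e by (simp add: stage_Suc bp_step_def)
  then show ?thesis unfolding closure_stage by blast
qed

lemma A_sub_closure: "A \<subseteq> bp_closure (Kn_edges n) line_adj r A"
  unfolding closure_stage using stage_0 by blast

lemma degsum_step:
  assumes xy: "x \<noteq> y" "x < n" "y < n"
    and Zx: "Zx \<subseteq> {0..<n}" "x \<notin> Zx" "y \<notin> Zx"
    and Zy: "Zy \<subseteq> {0..<n}" "x \<notin> Zy" "y \<notin> Zy"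
    and inx: "\<And>z. z \<in> Zx \<Longrightarrow> {x,z} \<in> bp_closure (Kn_edges n) line_adj r A"
    and iny: "\<And>z. z \<in> Zy \<Longrightarrow> {y,z} \<in> bp_closure (Kn_edges n) line_adj r A"
    and rc: "r \<le> card Zx + card Zy"
  shows "{x,y} \<in> bp_closure (Kn_edges n) line_adj r A"
proof (rule closure_step)
  show "{x,y} \<in> Kn_edges n" using xy by simp
  let ?cl = "bp_closure (Kn_edges n) line_adj r A"
  define K where "K = (\<lambda>z. {x,z}) ` Zx \<union> (\<lambda>z. {y,z}) ` Zy"
  have fZ: "finite Zx" "finite Zy" using Zx(1) Zy(1) by (auto intro: finite_subset)
  have i1: "inj_on (\<lambda>z. {x,z}) Zx" by (auto simp: inj_on_def doubleton_eq_iff)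
  have i2: "inj_on (\<lambda>z. {y,z}) Zy" by (auto simp: inj_on_def doubleton_eq_iff)
  have disj: "(\<lambda>z. {x,z}) ` Zx \<inter> (\<lambda>z. {y,z}) ` Zy = {}"
    using Zx Zy xy by (auto simp: doubleton_eq_iff)
  have cK: "card K = card Zx + card Zy"
    unfolding K_def using fZ i1 i2 disj by (simp add: card_Un_disjoint card_image)
  have "K \<subseteq> {f \<in> Kn_edges n. line_adj {x,y} f \<and> f \<in> ?cl}"
  proof
    fix f assume "f \<in> K"
    then show "f \<in> {f \<in> Kn_edges n. line_adj {x,y} f \<and> f \<in> ?cl}"
      unfolding K_def using Zx Zy xy inx iny
      by (auto simp: line_adj_def doubleton_eq_iff)
  qed
  then have "card K \<le> card {f \<in> Kn_edges n. line_adj {x,y} f \<and> f \<in> ?cl}"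
    by (intro card_mono) (auto intro: finite_subset[OF _ finite_Kn])
  with cK rc show "r \<le> card {f \<in> Kn_edges n. line_adj {x,y} f \<and> f \<in> ?cl}" by simp
qed



definition Aodd :: "nat \<Rightarrow> nat \<Rightarrow> nat set set" where
  "Aodd s c = (\<lambda>(k,j). {k,j}) ` {(k,j). k < s \<and> k + c \<le> j \<and> j < s + c}"

lemma Aodd_mem: "k < s \<Longrightarrow> k + c \<le> j \<Longrightarrow> j < s + c \<Longrightarrow> {k,j} \<in> Aodd s c"
  unfolding Aodd_def by (auto intro!: image_eqI[where x="(k,j)"])

lemma Aodd_sub: "1 \<le> c \<Longrightarrow> s + c \<le> n \<Longrightarrow> Aodd s c \<subseteq> Kn_edges n"
  unfolding Aodd_def by auto

lemma sum_tri2: "2 * (\<Sum>k<(s::nat). s - k) = s * (s + 1)"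
proof (induction s)
  case (Suc s)
  have "(\<Sum>k<Suc s. Suc s - k) = (\<Sum>k<s. Suc s - k) + 1" by simp
  also have "(\<Sum>k<s. Suc s - k) = (\<Sum>k<s. (s - k) + 1)"
    by (intro sum.cong) auto
  also have "\<dots> = (\<Sum>k<s. s - k) + s"
    by (subst sum.distrib) simp
  finally show ?case using Suc by (simp add: algebra_simps)
qed simp

lemma sum_tri: "(\<Sum>k<(s::nat). s - k) = s * (s + 1) div 2"
  using sum_tri2[of s] by simp

lemma Aodd_card: "card (Aodd s c) \<le> s * (s + 1) div 2"
proof -
  have eq: "{(k,j). k < s \<and> k + c \<le> j \<and> j < s + c} = Sigma {..<s} (\<lambda>k. {k+c..<s+c})" by auto
  have "card (Aodd s c) \<le> card {(k,j). k < s \<and> k + c \<le> j \<and> j < s + c}"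
    unfolding Aodd_def by (rule card_image_le) (simp add: eq)
  also have "\<dots> = (\<Sum>k<s. s - k)" unfolding eq by (simp add: card_SigmaI)
  finally show ?thesis by (simp add: sum_tri)
qed

lemma upper_odd:
  assumes c2: "1 \<le> c" and sc: "s + c \<le> n" and cond: "n = s + c \<or> s \<le> c"
    and r: "r + 1 \<le> 2 * s"
  shows "bp_closure (Kn_edges n) line_adj r (Aodd s c) = Kn_edges n"
proof -
  let ?A = "Aodd s c"
  let ?cl = "bp_closure (Kn_edges n) line_adj r ?A"
  have Acl: "\<And>e. e \<in> ?A \<Longrightarrow> e \<in> ?cl" using A_sub_closure by blast
  define full where "full k \<longleftrightarrow> (\<forall>x y. x < n \<longrightarrow> y < n \<longrightarrow> x \<noteq> y \<longrightarrow> x < k \<longrightarrow> {x,y} \<in> ?cl)" for k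
  have fullk: "full k" if "k \<le> s" for k
    using that
  proof (induction k)
    case 0 then show ?case by (simp add: full_def)
  next
    case (Suc k)
    then have IH: "full k" and ks: "k < s" by auto
    have kn: "k < n" using ks sc by simp
    have IH'': "{x, y} \<in> ?cl" if "x < k" "y < n" "x \<noteq> y" for x y
      using IH that kn unfolding full_def by auto
    have IH': "{y, x} \<in> ?cl" if "x < k" "y < n" "x \<noteq> y" for x y
      using IH''[OF that] by (simp add: insert_commute)
    have casc_all: "k < i \<longrightarrow> i < s \<longrightarrow> i < k + c \<longrightarrow> {k, i} \<in> ?cl" for i
    proof (induction i rule: less_induct)
      case (less i)
      show ?case
      proof (intro impI)
      assume p1: "k < i" and p2: "i < s" and p3: "i < k + c"
      note pp = p1 p2 p3
      have lessIH: "{k, z} \<in> ?cl" if "z < i" "k < z" for z using less.IH[of z] that pp by auto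
      show "{k, i} \<in> ?cl"
      proof (rule degsum_step[where Zx = "{0..<k} \<union> {k+1..<i} \<union> {k+c..<s+c}"
                              and Zy = "{0..<k} \<union> {i+c..<s+c}"])
        show "k \<noteq> i" "k < n" "i < n" using pp sc by auto
        show "{0..<k} \<union> {k+1..<i} \<union> {k+c..<s+c} \<subseteq> {0..<n}" using sc pp kn by auto
        show "k \<notin> {0..<k} \<union> {k+1..<i} \<union> {k+c..<s+c}" "i \<notin> {0..<k} \<union> {k+1..<i} \<union> {k+c..<s+c}"
          using pp c2 by auto
        show "{0..<k} \<union> {i+c..<s+c} \<subseteq> {0..<n}" using sc pp kn by auto
        show "k \<notin> {0..<k} \<union> {i+c..<s+c}" "i \<notin> {0..<k} \<union> {i+c..<s+c}"
          using pp c2 by auto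
        fix z assume z: "z \<in> {0..<k} \<union> {k+1..<i} \<union> {k+c..<s+c}"
        then consider "z < k" | "k < z \<and> z < i" | "k + c \<le> z \<and> z < s + c" by auto
        then show "{k, z} \<in> ?cl"
        proof cases
          case 1 then show ?thesis using IH' kn by auto
        next
          case 2 then show ?thesis using lessIH by auto
        next
          case 3 then show ?thesis using Acl Aodd_mem ks by auto
        qed
      next
        fix z assume z: "z \<in> {0..<k} \<union> {i+c..<s+c}"
        then consider "z < k" | "i + c \<le> z \<and> z < s + c" by auto
        then show "{i, z} \<in> ?cl"
        proof cases
          case 1 then show ?thesis using IH' pp sc by auto
        next
          case 2 then show ?thesis using Acl Aodd_mem pp by auto
        qed
      next
        have d1: "card ({0..<k} \<union> {k+1..<i} \<union> {k+c..<s+c}) = k + (i - (k+1)) + (s - k)"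
          using pp by (subst card_Un_disjoint; auto)+
        have d2: "card ({0..<k} \<union> {i+c..<s+c}) = k + (s - i)"
          using pp by (subst card_Un_disjoint; auto)
        show "r \<le> card ({0..<k} \<union> {k+1..<i} \<union> {k+c..<s+c}) + card ({0..<k} \<union> {i+c..<s+c})"
          unfolding d1 d2 using pp r by linarith
      qed
    qed
    qed
    have casc: "{k, i} \<in> ?cl" if "k < i" "i < s" "i < k + c" for i using casc_all that by blast
    have main: "{k, y} \<in> ?cl" if y: "y < n" "k < y" for y
    proof -
      consider "y < s \<and> y < k + c" | "k + c \<le> y \<and> y < s + c" | "\<not>(y < s \<and> y < k + c) \<and> \<not>(k + c \<le> y \<and> y < s + c)"
        by blast
      then show ?thesis
      proof cases
        case 1 then show ?thesis using casc y by auto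
      next
        case 2 then show ?thesis using Acl Aodd_mem ks by auto
      next
        case 3
        have T: "s \<le> k + c" using 3 cond y sc by auto
        show ?thesis
        proof (rule degsum_step[where Zx = "{0..<k} \<union> {k+1..<s} \<union> {k+c..<s+c}" and Zy = "{0..<k}"])
          show "k \<noteq> y" "k < n" "y < n" using y kn by auto
          show "{0..<k} \<union> {k+1..<s} \<union> {k+c..<s+c} \<subseteq> {0..<n}" using sc kn ks by auto
          show "k \<notin> {0..<k} \<union> {k+1..<s} \<union> {k+c..<s+c}" "y \<notin> {0..<k} \<union> {k+1..<s} \<union> {k+c..<s+c}"
            using 3 T c2 y by auto
          show "{0..<k} \<subseteq> {0..<n}" "k \<notin> {0..<k}" "y \<notin> {0..<k}" using kn y by auto
          fix z assume z: "z \<in> {0..<k} \<union> {k+1..<s} \<union> {k+c..<s+c}"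
          then consider "z < k" | "k < z \<and> z < s" | "k + c \<le> z \<and> z < s + c" by auto
          then show "{k, z} \<in> ?cl"
          proof cases
            case 1 then show ?thesis using IH' kn by auto
          next
            case 2 then show ?thesis using casc T by auto
          next
            case 3 then show ?thesis using Acl Aodd_mem ks by auto
          qed
        next
          fix z assume "z \<in> {0..<k}"
          then show "{y, z} \<in> ?cl" using IH' y by auto
        next
          have d1: "card ({0..<k} \<union> {k+1..<s} \<union> {k+c..<s+c}) = k + (s - (k+1)) + (s - k)"
            using T ks by (subst card_Un_disjoint; auto)+
          show "r \<le> card ({0..<k} \<union> {k+1..<s} \<union> {k+c..<s+c}) + card {0..<k}"
            unfolding d1 using ks r by simp
        qed
      qed
    qed
    show ?case unfolding full_def
    proof (intro allI impI)
      fix x y assume "x < n" "y < n" "x \<noteq> y" "x < Suc k"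
      then consider "x < k" | "x = k \<and> y < k" | "x = k \<and> k < y" by linarith
      then show "{x,y} \<in> ?cl"
      proof cases
        case 1 then show ?thesis using IH'' \<open>y < n\<close> \<open>x \<noteq> y\<close> by auto
      next
        case 2 then show ?thesis using IH' \<open>x < n\<close> by auto
      next
        case 3 then show ?thesis using main \<open>y < n\<close> by auto
      qed
    qed
  qed
  have fs: "full s" using fullk by simp
  show ?thesis
  proof
    show "?cl \<subseteq> Kn_edges n" unfolding closure_stage using stage_sub Aodd_sub c2 sc by blast
    show "Kn_edges n \<subseteq> ?cl"
    proof
      fix e assume "e \<in> Kn_edges n"
      then obtain x y where e: "x \<noteq> y" "x < n" "y < n" "e = {x,y}" by (auto simp: Kn_edges_iff)
      consider "x < s" | "y < s" | "s \<le> x \<and> s \<le> y" by linarith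
      then show "e \<in> ?cl"
      proof cases
        case 1 then show ?thesis using fs e unfolding full_def by auto
      next
        case 2 then show ?thesis using fs e unfolding full_def by (metis insert_commute)
      next
        case 3
        show ?thesis unfolding \<open>e = {x,y}\<close>
        proof (rule degsum_step[where Zx = "{0..<s}" and Zy = "{0..<s}"])
          show "x \<noteq> y" "x < n" "y < n" using e by auto
          show "{0..<s} \<subseteq> {0..<n}" using sc by auto
          show "x \<notin> {0..<s}" "y \<notin> {0..<s}" using 3 by auto
          show "{0..<s} \<subseteq> {0..<n}" using sc by auto
          show "x \<notin> {0..<s}" "y \<notin> {0..<s}" using 3 by auto
          show "{x, z} \<in> ?cl" if "z \<in> {0..<s}" for z
          proof -
            have "{z, x} \<in> ?cl" using fs that e 3 sc unfolding full_def by auto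
            then show ?thesis by (simp add: insert_commute)
          qed
          show "{y, z} \<in> ?cl" if "z \<in> {0..<s}" for z
          proof -
            have "{z, y} \<in> ?cl" using fs that e 3 sc unfolding full_def by auto
            then show ?thesis by (simp add: insert_commute)
          qed
          show "r \<le> card {0..<s} + card {0..<s}" using r by simp
        qed
      qed
    qed
  qed
qed



definition Aext :: "nat \<Rightarrow> nat set set" where
  "Aext s = (\<lambda>k. {k, Suc k}) ` {k. k < s \<and> odd (s - k)}"

definition Aeven :: "nat \<Rightarrow> nat \<Rightarrow> nat set set" where
  "Aeven s c = Aodd s c \<union> Aext s"

lemma Aeven_mem1: "k < s \<Longrightarrow> k + c \<le> j \<Longrightarrow> j < s + c \<Longrightarrow> {k,j} \<in> Aeven s c"
  unfolding Aeven_def using Aodd_mem by blast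

lemma Aeven_mem2: "k < s \<Longrightarrow> odd (s - k) \<Longrightarrow> {k, Suc k} \<in> Aeven s c"
  unfolding Aeven_def Aext_def by blast

lemma Aeven_sub: "1 \<le> c \<Longrightarrow> s + c \<le> n \<Longrightarrow> Aeven s c \<subseteq> Kn_edges n"
  unfolding Aeven_def Aext_def using Aodd_sub[of c s n] by auto

lemma card_odd_count: "card {k. k < s \<and> odd ((s::nat) - k)} = (s + 1) div 2"
proof (induction s)
  case (Suc s)
  have eq: "{k. k < Suc s \<and> odd (Suc s - k)} = (if odd (Suc s) then {0} else {}) \<union> Suc ` {k. k < s \<and> odd (s - k)}"
  proof (intro set_eqI iffI)
    fix k assume "k \<in> {k. k < Suc s \<and> odd (Suc s - k)}"
    then show "k \<in> (if odd (Suc s) then {0} else {}) \<union> Suc ` {k. k < s \<and> odd (s - k)}"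
      by (cases k) auto
  next
    fix k assume "k \<in> (if odd (Suc s) then {0} else {}) \<union> Suc ` {k. k < s \<and> odd (s - k)}"
    then show "k \<in> {k. k < Suc s \<and> odd (Suc s - k)}"
      by (auto split: if_splits)
  qed
  have "card {k. k < Suc s \<and> odd (Suc s - k)} = (if odd (Suc s) then 1 else 0) + card {k. k < s \<and> odd (s - k)}"
    unfolding eq by (subst card_Un_disjoint) (auto simp: card_image)
  then show ?case using Suc by auto
qed simp

lemma Aeven_card: "card (Aeven s c) \<le> s * (s + 1) div 2 + (s + 1) div 2"
proof -
  have "card (Aext s) \<le> card {k. k < s \<and> odd (s - k)}"
    unfolding Aext_def by (rule card_image_le) simp
  then have "card (Aext s) \<le> (s + 1) div 2" using card_odd_count by simp
  then show ?thesis unfolding Aeven_def using Aodd_card[of s c] card_Un_le[of "Aodd s c" "Aext s"] by linarith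
qed

lemma upper_even:
  assumes c2: "2 \<le> c" and sc: "s + c \<le> n" and cond: "n = s + c \<or> s + 1 \<le> c"
    and r: "r \<le> 2 * s"
  shows "bp_closure (Kn_edges n) line_adj r (Aeven s c) = Kn_edges n"
proof -
  let ?A = "Aeven s c"
  let ?cl = "bp_closure (Kn_edges n) line_adj r ?A"
  have Acl: "\<And>e. e \<in> ?A \<Longrightarrow> e \<in> ?cl" using A_sub_closure by blast
  define full where "full k \<longleftrightarrow> (\<forall>x y. x < n \<longrightarrow> y < n \<longrightarrow> x \<noteq> y \<longrightarrow> x < k \<longrightarrow> {x,y} \<in> ?cl)" for k
  have fullk: "full k" if "k \<le> s" for k
    using that
  proof (induction k)
    case 0 then show ?case by (simp add: full_def)
  next
    case (Suc k)
    then have IH: "full k" and ks: "k < s" by auto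
    have kn: "k < n" using ks sc by simp
    have IH'': "{x, y} \<in> ?cl" if "x < k" "y < n" "x \<noteq> y" for x y
      using IH that kn unfolding full_def by auto
    have IH': "{y, x} \<in> ?cl" if "x < k" "y < n" "x \<noteq> y" for x y
      using IH''[OF that] by (simp add: insert_commute)
    have casc_all: "k < i \<longrightarrow> i \<le> s \<longrightarrow> i < k + c \<longrightarrow> {k, i} \<in> ?cl" for i
    proof (induction i rule: less_induct)
      case (less i)
      show ?case
      proof (intro impI)
      assume p1: "k < i" and p2: "i \<le> s" and p3: "i < k + c"
      note pp = p1 p2 p3
      have lessIH: "{k, z} \<in> ?cl" if "z < i" "k < z" for z using less.IH[of z] that pp by auto
      show "{k, i} \<in> ?cl"
      proof (cases "i = Suc k \<and> odd (s - k)")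
        case True
        then show ?thesis using Acl Aeven_mem2[of k s c] ks by simp
      next
        case False
        define p where "p = (if odd (s - i) then Suc i else i - 1)"
        have pprop: "k < p \<and> p \<le> s \<and> p \<noteq> i \<and> p < i + c \<and> {i, p} \<in> ?A"
        proof (cases "odd (s - i)")
          case True
          then have "i < s" using odd_pos by fastforce
          then show ?thesis using True p_def pp c2 Acl Aeven_mem2[of i s c] by auto
        next
          case ev: False
          have "i \<noteq> Suc k"
          proof
            assume "i = Suc k"
            then have "s - k = Suc (s - i)" using pp by simp
            then show False using False ev \<open>i = Suc k\<close> by simp
          qed
          then have i2: "k + 2 \<le> i" using pp by simp
          have "odd (s - (i - 1))" using ev pp i2 by (simp add: Suc_diff_le)
          then have "{i - 1, Suc (i - 1)} \<in> ?A" using Aeven_mem2[of "i - 1" s c] pp i2 by simp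
          moreover have "Suc (i - 1) = i" using i2 by simp
          ultimately show ?thesis using ev p_def pp i2 by (auto simp: insert_commute)
        qed
        show ?thesis
      proof (rule degsum_step[where Zx = "{0..<k} \<union> {k+1..<i} \<union> {k+c..<s+c}"
                              and Zy = "{0..<k} \<union> {i+c..<s+c} \<union> {p}"])
        show "k \<noteq> i" "k < n" "i < n" using pp sc by auto
        show "{0..<k} \<union> {k+1..<i} \<union> {k+c..<s+c} \<subseteq> {0..<n}" using sc pp kn by auto
        show "k \<notin> {0..<k} \<union> {k+1..<i} \<union> {k+c..<s+c}" "i \<notin> {0..<k} \<union> {k+1..<i} \<union> {k+c..<s+c}"
          using pp c2 by auto
        show "{0..<k} \<union> {i+c..<s+c} \<union> {p} \<subseteq> {0..<n}" using sc pp kn pprop by auto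
        show "k \<notin> {0..<k} \<union> {i+c..<s+c} \<union> {p}" "i \<notin> {0..<k} \<union> {i+c..<s+c} \<union> {p}"
          using pp c2 pprop by auto
        fix z assume z: "z \<in> {0..<k} \<union> {k+1..<i} \<union> {k+c..<s+c}"
        then consider "z < k" | "k < z \<and> z < i" | "k + c \<le> z \<and> z < s + c" by auto
        then show "{k, z} \<in> ?cl"
        proof cases
          case 1 then show ?thesis using IH' kn by auto
        next
          case 2 then show ?thesis using lessIH by auto
        next
          case 3 then show ?thesis using Acl Aeven_mem1 ks by auto
        qed
      next
        fix z assume z: "z \<in> {0..<k} \<union> {i+c..<s+c} \<union> {p}"
        then consider "z < k" | "i + c \<le> z \<and> z < s + c" | "z = p" by auto
        then show "{i, z} \<in> ?cl"
        proof cases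
          case 1 then show ?thesis using IH' pp sc by auto
        next
          case 2 then show ?thesis using Acl Aeven_mem1 pp by auto
        next
          case 3 then show ?thesis using Acl pprop by auto
        qed
      next
        have d1: "card ({0..<k} \<union> {k+1..<i} \<union> {k+c..<s+c}) = k + (i - (k+1)) + (s - k)"
          using pp by (subst card_Un_disjoint; auto)+
        have d2: "card ({0..<k} \<union> {i+c..<s+c} \<union> {p}) = k + (s - i) + 1"
          using pp pprop by (subst card_Un_disjoint; auto)+
        show "r \<le> card ({0..<k} \<union> {k+1..<i} \<union> {k+c..<s+c}) + card ({0..<k} \<union> {i+c..<s+c} \<union> {p})"
          unfolding d1 d2 using pp r by linarith
      qed
      qed
    qed
    qed
    have casc: "{k, i} \<in> ?cl" if "k < i" "i \<le> s" "i < k + c" for i using casc_all that by blast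
    have main: "{k, y} \<in> ?cl" if y: "y < n" "k < y" for y
    proof -
      consider "y \<le> s \<and> y < k + c" | "k + c \<le> y \<and> y < s + c" | "\<not>(y \<le> s \<and> y < k + c) \<and> \<not>(k + c \<le> y \<and> y < s + c)"
        by blast
      then show ?thesis
      proof cases
        case 1 then show ?thesis using casc y by auto
      next
        case 2 then show ?thesis using Acl Aeven_mem1 ks by auto
      next
        case 3
        have T: "s < k + c" using 3 cond y sc by auto
        show ?thesis
        proof (rule degsum_step[where Zx = "{0..<k} \<union> {k+1..<Suc s} \<union> {k+c..<s+c}" and Zy = "{0..<k}"])
          show "k \<noteq> y" "k < n" "y < n" using y kn by auto
          show "{0..<k} \<union> {k+1..<Suc s} \<union> {k+c..<s+c} \<subseteq> {0..<n}" using sc kn ks c2 by auto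
          show "k \<notin> {0..<k} \<union> {k+1..<Suc s} \<union> {k+c..<s+c}" "y \<notin> {0..<k} \<union> {k+1..<Suc s} \<union> {k+c..<s+c}"
            using 3 T c2 y by auto
          show "{0..<k} \<subseteq> {0..<n}" "k \<notin> {0..<k}" "y \<notin> {0..<k}" using kn y by auto
          fix z assume z: "z \<in> {0..<k} \<union> {k+1..<Suc s} \<union> {k+c..<s+c}"
          then consider "z < k" | "k < z \<and> z \<le> s" | "k + c \<le> z \<and> z < s + c" by auto
          then show "{k, z} \<in> ?cl"
          proof cases
            case 1 then show ?thesis using IH' kn by auto
          next
            case 2 then show ?thesis using casc T by auto
          next
            case 3 then show ?thesis using Acl Aeven_mem1 ks by auto
          qed
        next
          fix z assume "z \<in> {0..<k}"
          then show "{y, z} \<in> ?cl" using IH' y by auto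
        next
          have d1: "card ({0..<k} \<union> {k+1..<Suc s} \<union> {k+c..<s+c}) = k + (Suc s - (k+1)) + (s - k)"
            using T ks by (subst card_Un_disjoint; auto)+
          show "r \<le> card ({0..<k} \<union> {k+1..<Suc s} \<union> {k+c..<s+c}) + card {0..<k}"
            unfolding d1 using ks r by simp
        qed
      qed
    qed
    show ?case unfolding full_def
    proof (intro allI impI)
      fix x y assume "x < n" "y < n" "x \<noteq> y" "x < Suc k"
      then consider "x < k" | "x = k \<and> y < k" | "x = k \<and> k < y" by linarith
      then show "{x,y} \<in> ?cl"
      proof cases
        case 1 then show ?thesis using IH'' \<open>y < n\<close> \<open>x \<noteq> y\<close> by auto
      next
        case 2 then show ?thesis using IH' \<open>x < n\<close> by auto
      next
        case 3 then show ?thesis using main \<open>y < n\<close> by auto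
      qed
    qed
  qed
  have fs: "full s" using fullk by simp
  show ?thesis
  proof
    have "?A \<subseteq> Kn_edges n" using Aeven_sub[of c s n] c2 sc by simp
    then show "?cl \<subseteq> Kn_edges n" unfolding closure_stage using stage_sub by blast
    show "Kn_edges n \<subseteq> ?cl"
    proof
      fix e assume "e \<in> Kn_edges n"
      then obtain x y where e: "x \<noteq> y" "x < n" "y < n" "e = {x,y}" by (auto simp: Kn_edges_iff)
      consider "x < s" | "y < s" | "s \<le> x \<and> s \<le> y" by linarith
      then show "e \<in> ?cl"
      proof cases
        case 1 then show ?thesis using fs e unfolding full_def by auto
      next
        case 2 then show ?thesis using fs e unfolding full_def by (metis insert_commute)
      next
        case 3
        show ?thesis unfolding \<open>e = {x,y}\<close>
        proof (rule degsum_step[where Zx = "{0..<s}" and Zy = "{0..<s}"])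
          show "x \<noteq> y" "x < n" "y < n" using e by auto
          show "{0..<s} \<subseteq> {0..<n}" using sc by auto
          show "x \<notin> {0..<s}" "y \<notin> {0..<s}" using 3 by auto
          show "{0..<s} \<subseteq> {0..<n}" using sc by auto
          show "x \<notin> {0..<s}" "y \<notin> {0..<s}" using 3 by auto
          show "{x, z} \<in> ?cl" if "z \<in> {0..<s}" for z
          proof -
            have "{z, x} \<in> ?cl" using fs that e 3 sc unfolding full_def by auto
            then show ?thesis by (simp add: insert_commute)
          qed
          show "{y, z} \<in> ?cl" if "z \<in> {0..<s}" for z
          proof -
            have "{z, y} \<in> ?cl" using fs that e 3 sc unfolding full_def by auto
            then show ?thesis by (simp add: insert_commute)
          qed
          show "r \<le> card {0..<s} + card {0..<s}" using r by simp
        qed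
      qed
    qed
  qed
qed




locale perc_setup =
  fixes n r :: nat and A :: "nat set set"
  assumes A_sub: "A \<subseteq> Kn_edges n"
    and perc: "bp_closure (Kn_edges n) line_adj r A = Kn_edges n"
begin

definition rnd :: "nat set \<Rightarrow> nat" where
  "rnd e = (LEAST t. e \<in> stage n r A t)"

lemma rnd_ex: "e \<in> Kn_edges n \<Longrightarrow> \<exists>t. e \<in> stage n r A t"
  using perc unfolding closure_stage by auto

lemma rnd_in: "e \<in> Kn_edges n \<Longrightarrow> e \<in> stage n r A (rnd e)"
  unfolding rnd_def using rnd_ex by (rule LeastI_ex)

lemma rnd_le: "e \<in> stage n r A t \<Longrightarrow> rnd e \<le> t"
  unfolding rnd_def by (rule Least_le)

lemma rnd_0: "e \<in> Kn_edges n \<Longrightarrow> rnd e = 0 \<longleftrightarrow> e \<in> A"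
  using rnd_in[of e] rnd_le[of e 0] by auto

lemma rnd_step:
  assumes e: "e \<in> Kn_edges n" "e \<notin> A"
  shows "r \<le> card {u \<in> Kn_edges n. line_adj e u \<and> u \<in> stage n r A (rnd e - 1)}"
proof -
  obtain t where t: "rnd e = Suc t" using rnd_0[OF e(1)] e(2) by (cases "rnd e") auto
  have "e \<in> stage n r A (Suc t)" using rnd_in[OF e(1)] t by simp
  moreover have "e \<notin> stage n r A t"
  proof
    assume "e \<in> stage n r A t"
    then have "rnd e \<le> t" by (rule rnd_le)
    with t show False by simp
  qed
  ultimately show ?thesis using t by (simp add: stage_Suc bp_step_def)
qed

definition idx :: "nat set \<Rightarrow> nat" where
  "idx = (SOME h. bij_betw h (Kn_edges n) {0..<card (Kn_edges n)})"

lemma idx_bij: "bij_betw idx (Kn_edges n) {0..<card (Kn_edges n)}"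
  unfolding idx_def by (rule someI_ex[OF ex_bij_betw_finite_nat[OF finite_Kn]])

lemma idx_lt: "e \<in> Kn_edges n \<Longrightarrow> idx e < card (Kn_edges n)"
  using idx_bij by (auto simp: bij_betw_def)

definition ts :: "nat set \<Rightarrow> nat" where
  "ts e = (if e \<in> A then 0 else Suc (rnd e * card (Kn_edges n) + idx e))"

lemma ts_A: "e \<in> A \<Longrightarrow> ts e = 0" by (simp add: ts_def)

lemma ts_pos: "e \<notin> A \<Longrightarrow> 1 \<le> ts e" by (simp add: ts_def)

lemma ts_lt:
  assumes "e \<in> Kn_edges n" "u \<in> Kn_edges n" "e \<notin> A" "rnd u < rnd e"
  shows "ts u < ts e"
proof (cases "u \<in> A")
  case True then show ?thesis using assms by (simp add: ts_def)
next
  case False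
  let ?N = "card (Kn_edges n)"
  have "rnd u * ?N + idx u < rnd u * ?N + ?N" using idx_lt[OF assms(2)] by simp
  also have "\<dots> = Suc (rnd u) * ?N" by simp
  also have "\<dots> \<le> rnd e * ?N" using assms(4) by (intro mult_le_mono1) simp
  also have "\<dots> \<le> rnd e * ?N + idx e" by simp
  finally show ?thesis using False assms(3) by (simp add: ts_def)
qed

lemma divmod_unique_aux:
  fixes a b c d N :: nat
  assumes "a * N + b = c * N + d" "b < N" "d < N"
  shows "a = c \<and> b = d"
proof -
  have "a = c"
  proof (rule ccontr)
    assume "a \<noteq> c"
    then consider "a < c" | "c < a" by linarith
    then show False
    proof cases
      case 1
      have "a * N + b < Suc a * N" using assms by simp
      also have "\<dots> \<le> c * N" using 1 by (intro mult_le_mono1) simp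
      finally show False using assms(1) by simp
    next
      case 2
      have "c * N + d < Suc c * N" using assms by simp
      also have "\<dots> \<le> a * N" using 2 by (intro mult_le_mono1) simp
      finally show False using assms(1) by simp
    qed
  qed
  then show ?thesis using assms by simp
qed

lemma ts_inj:
  assumes "e \<in> Kn_edges n" "f \<in> Kn_edges n" "e \<notin> A" "f \<notin> A" "ts e = ts f"
  shows "e = f"
proof -
  have "rnd e * card (Kn_edges n) + idx e = rnd f * card (Kn_edges n) + idx f"
    using assms by (simp add: ts_def)
  then have "idx e = idx f" using divmod_unique_aux idx_lt assms(1,2) by blast
  then show ?thesis using idx_bij assms(1,2) by (auto simp: bij_betw_def inj_on_def)
qed

definition dl :: "nat \<Rightarrow> nat \<Rightarrow> nat" where
  "dl x i = card {f \<in> Kn_edges n. x \<in> f \<and> ts f < i}"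

lemma dl_mono: "i \<le> j \<Longrightarrow> dl x i \<le> dl x j"
  unfolding dl_def by (rule card_mono) (auto intro: finite_subset[OF _ finite_Kn])

lemma dl_0: "dl x 0 = 0" by (simp add: dl_def)

lemma key:
  assumes e: "{x,y} \<in> Kn_edges n" "{x,y} \<notin> A"
  shows "r \<le> dl x (ts {x,y}) + dl y (ts {x,y})"
proof -
  let ?e = "{x,y}"
  let ?U = "{u \<in> Kn_edges n. line_adj ?e u \<and> u \<in> stage n r A (rnd ?e - 1)}"
  have r1: "r \<le> card ?U" by (rule rnd_step[OF e])
  have rpos: "rnd ?e \<noteq> 0" using rnd_0[OF e(1)] e(2) by simp
  have "?U \<subseteq> {f \<in> Kn_edges n. x \<in> f \<and> ts f < ts ?e} \<union> {f \<in> Kn_edges n. y \<in> f \<and> ts f < ts ?e}"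
  proof
    fix u assume u: "u \<in> ?U"
    then have "rnd u \<le> rnd ?e - 1" using rnd_le by blast
    then have "rnd u < rnd ?e" using rpos by simp
    then have "ts u < ts ?e" using ts_lt[OF e(1) _ e(2)] u by blast
    moreover have "x \<in> u \<or> y \<in> u" using u by (auto simp: line_adj_def)
    ultimately show "u \<in> {f \<in> Kn_edges n. x \<in> f \<and> ts f < ts ?e} \<union> {f \<in> Kn_edges n. y \<in> f \<and> ts f < ts ?e}"
      using u by auto
  qed
  then have "card ?U \<le> card ({f \<in> Kn_edges n. x \<in> f \<and> ts f < ts ?e} \<union> {f \<in> Kn_edges n. y \<in> f \<and> ts f < ts ?e})"
    by (intro card_mono) (auto intro: finite_subset[OF _ finite_Kn])
  also have "\<dots> \<le> dl x (ts ?e) + dl y (ts ?e)" unfolding dl_def by (rule card_Un_le)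
  finally show ?thesis using r1 by simp
qed

lemma edges_at: "x < n \<Longrightarrow> {f \<in> Kn_edges n. x \<in> f} = (\<lambda>y. {x,y}) ` ({0..<n} - {x})"
proof (intro set_eqI iffI)
  fix f assume "f \<in> {f \<in> Kn_edges n. x \<in> f}"
  then obtain a b where ab: "a \<noteq> b" "a < n" "b < n" "f = {a,b}" "x \<in> f" by (auto simp: Kn_edges_iff)
  then consider "x = a" | "x = b" by auto
  then show "f \<in> (\<lambda>y. {x,y}) ` ({0..<n} - {x})"
  proof cases
    case 1 then show ?thesis using ab by auto
  next
    case 2 then show ?thesis using ab by (auto simp: insert_commute)
  qed
next
  fix f assume "x < n" "f \<in> (\<lambda>y. {x,y}) ` ({0..<n} - {x})"
  then show "f \<in> {f \<in> Kn_edges n. x \<in> f}" by auto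
qed

lemma deg_full: "x < n \<Longrightarrow> card {f \<in> Kn_edges n. x \<in> f} = n - 1"
proof -
  assume x: "x < n"
  have "inj_on (\<lambda>y. {x,y}) ({0..<n} - {x})" by (auto simp: inj_on_def doubleton_eq_iff)
  then show ?thesis unfolding edges_at[OF x] using x by (simp add: card_image)
qed

lemma dl_eventually: "x < n \<Longrightarrow> \<exists>i. dl x i = n - 1"
proof -
  assume x: "x < n"
  define M where "M = Suc (Max (insert 0 (ts ` Kn_edges n)))"
  have "\<And>f. f \<in> Kn_edges n \<Longrightarrow> ts f < M" unfolding M_def using finite_Kn
    by (simp add: le_imp_less_Suc)
  then have "{f \<in> Kn_edges n. x \<in> f \<and> ts f < M} = {f \<in> Kn_edges n. x \<in> f}" by auto
  then show ?thesis using deg_full[OF x] unfolding dl_def by metis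
qed

end



locale lb = perc_setup +
  fixes tau :: nat
  assumes tau_pos: "1 \<le> tau" and tau_n: "tau + 1 \<le> n" and r_tau: "2 * tau \<le> r + 2"
begin

definition kap :: "nat \<Rightarrow> nat" where
  "kap x = (LEAST i. tau \<le> dl x i)"

lemma kap_ex: "x < n \<Longrightarrow> \<exists>i. tau \<le> dl x i"
proof -
  assume x: "x < n"
  then obtain i where "dl x i = n - 1" using dl_eventually by blast
  then show ?thesis using tau_n by (intro exI[of _ i]) simp
qed

lemma kap_ge: "x < n \<Longrightarrow> tau \<le> dl x (kap x)"
  unfolding kap_def using kap_ex by (rule LeastI_ex)

lemma kap_le: "tau \<le> dl x i \<Longrightarrow> kap x \<le> i"
  unfolding kap_def by (rule Least_le)

lemma kap_lt: "i < kap x \<Longrightarrow> dl x i < tau"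
  unfolding kap_def using not_less_Least by (metis not_le)

lemma kap_pos: "x < n \<Longrightarrow> 1 \<le> kap x"
proof (rule ccontr)
  assume "x < n" "\<not> 1 \<le> kap x"
  then have "kap x = 0" by simp
  then have "tau \<le> dl x 0" using kap_ge[OF \<open>x < n\<close>] by simp
  then show False using dl_0 tau_pos by simp
qed

definition prec :: "nat \<Rightarrow> nat \<Rightarrow> bool" where
  "prec x y \<longleftrightarrow> kap x < kap y \<or> (kap x = kap y \<and> x < y)"

lemma prec_irrefl: "\<not> prec x x" by (simp add: prec_def)
lemma prec_trans: "prec x y \<Longrightarrow> prec y z \<Longrightarrow> prec x z" by (auto simp: prec_def)
lemma prec_asym: "prec x y \<Longrightarrow> \<not> prec y x" by (auto simp: prec_def)
lemma prec_total: "x \<noteq> y \<Longrightarrow> prec x y \<or> prec y x" by (auto simp: prec_def)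
lemma prec_kap: "prec x y \<Longrightarrow> kap x \<le> kap y" by (auto simp: prec_def)

lemma dl_Suc:
  assumes f: "f \<in> Kn_edges n" "x \<in> f" "ts f = i"
  shows "Suc (dl x i) \<le> dl x (Suc i)"
proof -
  have "insert f {g \<in> Kn_edges n. x \<in> g \<and> ts g < i} \<subseteq> {g \<in> Kn_edges n. x \<in> g \<and> ts g < Suc i}"
    using f by auto
  then have "card (insert f {g \<in> Kn_edges n. x \<in> g \<and> ts g < i}) \<le> dl x (Suc i)"
    unfolding dl_def by (intro card_mono) (auto intro: finite_subset[OF _ finite_Kn])
  moreover have "card (insert f {g \<in> Kn_edges n. x \<in> g \<and> ts g < i}) = Suc (dl x i)"
    unfolding dl_def using f by (subst card_insert_disjoint) (auto intro: finite_subset[OF _ finite_Kn])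
  ultimately show ?thesis by simp
qed

lemma edge_at_kap:
  assumes x: "x < n"
  shows "\<exists>f \<in> Kn_edges n. x \<in> f \<and> ts f = kap x - 1"
proof (rule ccontr)
  assume no: "\<not> ?thesis"
  let ?m = "kap x"
  have m1: "1 \<le> ?m" using kap_pos[OF x] .
  have "{f \<in> Kn_edges n. x \<in> f \<and> ts f < ?m} = {f \<in> Kn_edges n. x \<in> f \<and> ts f < ?m - 1}"
  proof (intro set_eqI iffI)
    fix f assume f: "f \<in> {f \<in> Kn_edges n. x \<in> f \<and> ts f < ?m}"
    then have "ts f \<noteq> ?m - 1" using no by auto
    then show "f \<in> {f \<in> Kn_edges n. x \<in> f \<and> ts f < ?m - 1}" using f by auto
  qed auto
  then have "dl x ?m = dl x (?m - 1)" unfolding dl_def by simp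
  moreover have "dl x (?m - 1) < tau" using m1 by (intro kap_lt) simp
  moreover have "tau \<le> dl x ?m" using kap_ge[OF x] .
  ultimately show False by simp
qed

lemma class3:
  assumes "x < n" "y < n" "z < n" "x \<noteq> y" "y \<noteq> z" "x \<noteq> z"
    and "kap x = kap y" "kap y = kap z" "2 \<le> kap x"
  shows False
proof -
  obtain fx where fx: "fx \<in> Kn_edges n" "x \<in> fx" "ts fx = kap x - 1" using edge_at_kap[OF assms(1)] by blast
  obtain fy where fy: "fy \<in> Kn_edges n" "y \<in> fy" "ts fy = kap y - 1" using edge_at_kap[OF assms(2)] by blast
  obtain fz where fz: "fz \<in> Kn_edges n" "z \<in> fz" "ts fz = kap z - 1" using edge_at_kap[OF assms(3)] by blast
  have nA: "fx \<notin> A" "fy \<notin> A" "fz \<notin> A" using fx fy fz assms(7-9) ts_A by fastforce+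
  have "fx = fy" using ts_inj[OF fx(1) fy(1) nA(1,2)] fx fy assms by simp
  moreover have "fx = fz" using ts_inj[OF fx(1) fz(1) nA(1,3)] fx fz assms by simp
  ultimately have "x \<in> fx" "y \<in> fx" "z \<in> fx" using fx fy fz by auto
  moreover obtain a b where "fx = {a,b}" using fx(1) by (auto simp: Kn_edges_iff)
  ultimately show False using assms(4-6) by auto
qed

definition Tie :: "nat \<Rightarrow> nat set" where
  "Tie x = {y \<in> {0..<n}. prec x y \<and> kap y = kap x \<and> 2 \<le> kap x}"

definition tie :: "nat \<Rightarrow> bool" where
  "tie x \<longleftrightarrow> Tie x \<noteq> {}"

lemma card_Tie: "x < n \<Longrightarrow> card (Tie x) \<le> (if tie x then 1 else 0)"
proof -
  assume x: "x < n"
  have "card (Tie x) \<le> Suc 0"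
  proof (subst card_le_Suc0_iff_eq)
    show "finite (Tie x)" unfolding Tie_def by simp
    show "\<forall>a\<in>Tie x. \<forall>b\<in>Tie x. a = b"
    proof (intro ballI)
      fix a b assume a: "a \<in> Tie x" and b: "b \<in> Tie x"
      show "a = b"
      proof (rule ccontr)
        assume "a \<noteq> b"
        then show False using class3[of x a b] a b x prec_irrefl unfolding Tie_def by fastforce
      qed
    qed
  qed
  then show ?thesis unfolding tie_def by auto
qed

definition rk :: "nat \<Rightarrow> nat" where
  "rk x = card {y \<in> {0..<n}. prec y x}"

definition bA :: "nat \<Rightarrow> nat" where
  "bA x = card {y \<in> {0..<n}. prec x y \<and> {x,y} \<in> A}"

lemma partner:
  assumes x: "x < n" and f: "f \<in> Kn_edges n" "x \<in> f" "ts f < kap x"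
  shows "\<exists>y. f = {x,y} \<and> y < n \<and> (prec y x \<or> (prec x y \<and> {x,y} \<in> A) \<or> (y \<in> Tie x \<and> \<not> 2 * tau \<le> r + 1))"
proof -
  obtain y where y: "f = {x,y}" "y < n" "y \<noteq> x"
  proof -
    obtain a b where ab: "a \<noteq> b" "a < n" "b < n" "f = {a,b}" using f(1) by (auto simp: Kn_edges_iff)
    show ?thesis
    proof (cases "x = a")
      case True then show ?thesis using that ab by auto
    next
      case False then have "x = b" using ab f(2) by auto
      then show ?thesis using that ab by (auto simp: insert_commute)
    qed
  qed
  have fV: "{x,y} \<in> Kn_edges n" using f y by simp
  show ?thesis
  proof (cases "f \<in> A")
    case True
    then show ?thesis using y prec_total[of x y] by auto
  next
    case nA: False
    let ?i = "ts f"
    have dx: "dl x ?i < tau" using kap_lt f(3) .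
    have kk: "r \<le> dl x ?i + dl y ?i" using key[of x y] fV nA y by simp
    show ?thesis
    proof (cases "tau \<le> dl y ?i")
      case True
      then have "kap y \<le> ?i" by (rule kap_le)
      then have "prec y x" using f(3) by (simp add: prec_def)
      then show ?thesis using y by auto
    next
      case False
      then have dy: "dl y ?i < tau" by simp
      have strict: "\<not> 2 * tau \<le> r + 1" using kk dx dy by linarith
      have ex: "dl x ?i + 1 = tau" "dl y ?i + 1 = tau" using kk dx dy r_tau by linarith+
      have "Suc (dl x ?i) \<le> dl x (Suc ?i)" using dl_Suc f by simp
      then have "kap x \<le> Suc ?i" using ex by (intro kap_le) simp
      then have kx: "kap x = Suc ?i" using f(3) by simp
      have "Suc (dl y ?i) \<le> dl y (Suc ?i)" using dl_Suc[of f y] f y by simp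
      then have "kap y \<le> Suc ?i" using ex by (intro kap_le) simp
      moreover have "\<not> kap y \<le> ?i"
      proof
        assume "kap y \<le> ?i"
        then have "dl y (kap y) \<le> dl y ?i" by (rule dl_mono)
        then show False using kap_ge[OF y(2)] dy by simp
      qed
      ultimately have ky: "kap y = Suc ?i" by simp
      have "1 \<le> ?i" using ts_pos nA by simp
      then have k2: "2 \<le> kap x" using kx by simp
      consider "prec y x" | "prec x y" using prec_total y by blast
      then show ?thesis
      proof cases
        case 1 then show ?thesis using y by auto
      next
        case 2
        then have "y \<in> Tie x" unfolding Tie_def using y kx ky k2 by simp
        then show ?thesis using y strict by auto
      qed
    qed
  qed
qed

lemma vertex_bound:
  assumes x: "x < n"
  shows "tau \<le> rk x + bA x + (if 2 * tau \<le> r + 1 then 0 else card (Tie x))"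
proof -
  let ?E = "{y \<in> {0..<n}. prec y x}"
  let ?AL = "{y \<in> {0..<n}. prec x y \<and> {x,y} \<in> A}"
  let ?T = "(if 2 * tau \<le> r + 1 then {} else Tie x)"
  have sub: "{f \<in> Kn_edges n. x \<in> f \<and> ts f < kap x} \<subseteq> (\<lambda>y. {x,y}) ` (?E \<union> ?AL \<union> ?T)"
  proof
    fix f assume "f \<in> {f \<in> Kn_edges n. x \<in> f \<and> ts f < kap x}"
    then obtain y where "f = {x,y}" "y < n" "prec y x \<or> (prec x y \<and> {x,y} \<in> A) \<or> (y \<in> Tie x \<and> \<not> 2 * tau \<le> r + 1)"
      using partner[OF x] by blast
    then show "f \<in> (\<lambda>y. {x,y}) ` (?E \<union> ?AL \<union> ?T)" by auto
  qed
  have "tau \<le> dl x (kap x)" using kap_ge[OF x] .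
  also have "\<dots> \<le> card ((\<lambda>y. {x,y}) ` (?E \<union> ?AL \<union> ?T))"
    unfolding dl_def using sub by (intro card_mono) (auto simp: Tie_def)
  also have "\<dots> \<le> card (?E \<union> ?AL \<union> ?T)" by (rule card_image_le) (simp add: Tie_def)
  also have "\<dots> \<le> card ?E + card ?AL + card ?T"
    by (meson card_Un_le add_le_mono1 order_trans)
  finally show ?thesis unfolding rk_def bA_def by (simp split: if_splits)
qed


lemma rk_lt_n: "x < n \<Longrightarrow> rk x < n"
proof -
  assume x: "x < n"
  have "{y \<in> {0..<n}. prec y x} \<subseteq> {0..<n} - {x}" using prec_irrefl by auto
  then have "rk x \<le> card ({0..<n} - {x})" unfolding rk_def by (intro card_mono) auto
  then show ?thesis using x by simp
qed

lemma rk_mono: "x < n \<Longrightarrow> y < n \<Longrightarrow> prec x y \<Longrightarrow> rk x < rk y"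
proof -
  assume xy: "x < n" "y < n" "prec x y"
  have sub: "{z \<in> {0..<n}. prec z x} \<subseteq> {z \<in> {0..<n}. prec z y}"
  proof
    fix z assume "z \<in> {z \<in> {0..<n}. prec z x}"
    then show "z \<in> {z \<in> {0..<n}. prec z y}" using prec_trans[of z x y] xy by auto
  qed
  have "x \<in> {z \<in> {0..<n}. prec z y}" "x \<notin> {z \<in> {0..<n}. prec z x}" using xy prec_irrefl by auto
  then have "{z \<in> {0..<n}. prec z x} \<subset> {z \<in> {0..<n}. prec z y}" using sub by blast
  then show ?thesis unfolding rk_def by (intro psubset_card_mono) auto
qed

lemma rk_inj: "inj_on rk {0..<n}"
proof (rule inj_onI)
  fix x y assume "x \<in> {0..<n}" "y \<in> {0..<n}" "rk x = rk y"
  show "x = y"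
  proof (rule ccontr)
    assume "x \<noteq> y"
    then consider "prec x y" | "prec y x" using prec_total by blast
    then show False
    proof cases
      case 1 then show False using rk_mono[of x y] \<open>rk x = rk y\<close> \<open>x \<in> {0..<n}\<close> \<open>y \<in> {0..<n}\<close> by simp
    next
      case 2 then show False using rk_mono[of y x] \<open>rk x = rk y\<close> \<open>x \<in> {0..<n}\<close> \<open>y \<in> {0..<n}\<close> by simp
    qed
  qed
qed

lemma rk_image: "rk ` {0..<n} = {0..<n}"
proof (rule card_subset_eq)
  show "finite {0..<n}" by simp
  show "rk ` {0..<n} \<subseteq> {0..<n}" using rk_lt_n by auto
  show "card (rk ` {0..<n}) = card {0..<n}" using rk_inj by (simp add: card_image)
qed

lemma rk_bij_S: "bij_betw rk {x \<in> {0..<n}. rk x < tau} {..<tau}"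
proof (rule bij_betw_subset[of rk "{0..<n}" "{0..<n}"])
  show "bij_betw rk {0..<n} {0..<n}" using rk_inj rk_image by (simp add: bij_betw_def)
  show "{x \<in> {0..<n}. rk x < tau} \<subseteq> {0..<n}" by auto
  show "rk ` {x \<in> {0..<n}. rk x < tau} = {..<tau}"
  proof (intro set_eqI iffI)
    fix k assume "k \<in> rk ` {x \<in> {0..<n}. rk x < tau}"
    then show "k \<in> {..<tau}" by auto
  next
    fix k assume k: "k \<in> {..<tau}"
    then have "k \<in> rk ` {0..<n}" using rk_image tau_n by auto
    then obtain x where "x \<in> {0..<n}" "rk x = k" by auto
    then show "k \<in> rk ` {x \<in> {0..<n}. rk x < tau}" using k by auto
  qed
qed

lemma rk_succ:
  assumes "x < n" "y < n" "prec x y" and nb: "\<And>z. z < n \<Longrightarrow> prec x z \<Longrightarrow> prec z y \<Longrightarrow> False"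
  shows "rk y = Suc (rk x)"
proof -
  have eq: "{z \<in> {0..<n}. prec z y} = insert x {z \<in> {0..<n}. prec z x}"
  proof (intro set_eqI iffI)
    fix z assume z: "z \<in> {z \<in> {0..<n}. prec z y}"
    show "z \<in> insert x {z \<in> {0..<n}. prec z x}"
    proof (cases "z = x")
      case False
      then have "prec z x \<or> prec x z" using prec_total by blast
      then show ?thesis using z nb by auto
    qed simp
  next
    fix z assume "z \<in> insert x {z \<in> {0..<n}. prec z x}"
    then show "z \<in> {z \<in> {0..<n}. prec z y}" using assms prec_trans by auto
  qed
  show ?thesis unfolding rk_def eq using prec_irrefl by (subst card_insert_disjoint) auto
qed

lemma tie_succ:
  assumes x: "x < n" and t: "tie x"
  shows "\<exists>y < n. rk y = Suc (rk x) \<and> \<not> tie y"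
proof -
  obtain y where y: "y < n" "prec x y" "kap y = kap x" "2 \<le> kap x"
    using t unfolding tie_def Tie_def by auto
  have nb: False if "z < n" "prec x z" "prec z y" for z
  proof -
    have "kap x \<le> kap z" "kap z \<le> kap y" using prec_kap that by auto
    then have kz: "kap z = kap x" using y by simp
    have ne: "x \<noteq> z" "z \<noteq> y" "x \<noteq> y" using that y prec_irrefl by auto
    show False using class3[of x z y] x y that ne kz by simp
  qed
  have "rk y = Suc (rk x)" using rk_succ[OF x y(1) y(2)] nb by blast
  moreover have "\<not> tie y"
  proof
    assume "tie y"
    then obtain w where w: "w < n" "prec y w" "kap w = kap y" using tie_def Tie_def by auto
    have "prec x w" using prec_trans y(2) w(2) .
    then have ne: "x \<noteq> y" "y \<noteq> w" "x \<noteq> w" using y w prec_irrefl by auto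
    show False using class3[of x y w] x y w ne by simp
  qed
  ultimately show ?thesis using y(1) by blast
qed

lemma card_noconsec:
  fixes K :: "nat set"
  assumes K: "K \<subseteq> {..<t}" and nc: "\<And>k. k \<in> K \<Longrightarrow> Suc k \<notin> K"
  shows "card K \<le> (t + 1) div 2"
proof -
  have "inj_on (\<lambda>k. k div 2) K"
  proof (rule inj_onI)
    fix a b assume ab: "a \<in> K" "b \<in> K" "a div 2 = b div 2"
    show "a = b"
    proof (rule ccontr)
      assume "a \<noteq> b"
      then consider "a < b" | "b < a" by linarith
      then show False
      proof cases
        case 1 then have "b = Suc a" using ab(3) by presburger
        then show False using nc ab by blast
      next
        case 2 then have "a = Suc b" using ab(3) by presburger
        then show False using nc ab by blast
      qed
    qed
  qed
  moreover have "(\<lambda>k. k div 2) ` K \<subseteq> {..<(t + 1) div 2}" using K by auto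
  ultimately have "card K \<le> card {..<(t + 1) div 2}" by (intro card_inj_on_le) auto
  then show ?thesis by simp
qed

lemma A_count: "card A = (\<Sum>x\<in>{0..<n}. bA x)"
proof -
  let ?P = "Sigma {0..<n} (\<lambda>x. {y \<in> {0..<n}. prec x y \<and> {x,y} \<in> A})"
  have cP: "card ?P = (\<Sum>x\<in>{0..<n}. bA x)" unfolding bA_def by (simp add: card_SigmaI)
  have inj: "inj_on (\<lambda>(x,y). {x,y}) ?P"
  proof (rule inj_onI)
    fix p q assume p: "p \<in> ?P" and q: "q \<in> ?P" and eq: "(\<lambda>(x,y). {x,y}) p = (\<lambda>(x,y). {x,y}) q"
    obtain a b where ab: "p = (a,b)" by fastforce
    obtain c d where cd: "q = (c,d)" by fastforce
    have "{a,b} = {c,d}" using eq ab cd by simp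
    then have "(a = c \<and> b = d) \<or> (a = d \<and> b = c)" by (auto simp: doubleton_eq_iff)
    then show "p = q" using p q ab cd prec_asym by auto
  qed
  have img: "(\<lambda>(x,y). {x,y}) ` ?P = A"
  proof (intro set_eqI iffI)
    fix e assume "e \<in> (\<lambda>(x,y). {x,y}) ` ?P"
    then show "e \<in> A" by auto
  next
    fix e assume e: "e \<in> A"
    have "e \<in> Kn_edges n" using e A_sub by blast
    then obtain a b where ab: "a \<noteq> b" "a < n" "b < n" "e = {a,b}" unfolding Kn_edges_iff by blast
    consider "prec a b" | "prec b a" using prec_total ab by blast
    then show "e \<in> (\<lambda>(x,y). {x,y}) ` ?P"
    proof cases
      case 1 then show ?thesis using ab e by (auto intro!: image_eqI[where x="(a,b)"])
    next
      case 2 then show ?thesis using ab e by (auto simp: insert_commute intro!: image_eqI[where x="(b,a)"])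
    qed
  qed
  have "card A = card ?P" using card_image[OF inj] img by simp
  then show ?thesis using cP by simp
qed

lemma lower_main:
  "tau * (tau + 1) div 2 - (if 2 * tau \<le> r + 1 then 0 else (tau + 1) div 2) \<le> card A"
proof -
  let ?S = "{x \<in> {0..<n}. rk x < tau}"
  define t where "t x = (if 2 * tau \<le> r + 1 then 0 else (if tie x then 1 else 0::nat))" for x
  have vb: "(tau - rk x) - t x \<le> bA x" if "x < n" for x
    using vertex_bound[OF that] card_Tie[OF that] unfolding t_def by (auto split: if_splits)
  have "(\<Sum>x\<in>?S. (tau - rk x) - t x) \<le> (\<Sum>x\<in>?S. bA x)"
    using vb by (intro sum_mono) auto
  also have "\<dots> \<le> (\<Sum>x\<in>{0..<n}. bA x)" by (intro sum_mono2) auto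
  also have "\<dots> = card A" using A_count by simp
  finally have s1: "(\<Sum>x\<in>?S. (tau - rk x) - t x) \<le> card A" .
  have "(\<Sum>x\<in>?S. (tau - rk x) - t x) = (\<Sum>x\<in>?S. tau - rk x) - (\<Sum>x\<in>?S. t x)"
    by (rule sum_subtractf_nat) (auto simp: t_def)
  moreover have "(\<Sum>x\<in>?S. tau - rk x) = (\<Sum>k<tau. tau - k)"
    using sum.reindex_bij_betw[OF rk_bij_S, of "\<lambda>k. tau - k"] by simp
  moreover have "(\<Sum>x\<in>?S. t x) \<le> (if 2 * tau \<le> r + 1 then 0 else (tau + 1) div 2)"
  proof (cases "2 * tau \<le> r + 1")
    case True then show ?thesis by (simp add: t_def)
  next
    case False
    have "(\<Sum>x\<in>?S. t x) = card (?S \<inter> Collect tie)"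
      using False by (simp add: t_def sum.If_cases)
    also have "\<dots> = card {x \<in> ?S. tie x}" by (rule arg_cong[where f=card]) auto
    also have "\<dots> = card (rk ` {x \<in> ?S. tie x})"
      by (rule card_image[symmetric]) (rule inj_on_subset[OF rk_inj], auto)
    also have "\<dots> \<le> (tau + 1) div 2"
    proof (rule card_noconsec)
      show "rk ` {x \<in> ?S. tie x} \<subseteq> {..<tau}" by auto
      fix k assume "k \<in> rk ` {x \<in> ?S. tie x}"
      then obtain x where x: "x < n" "rk x < tau" "tie x" "k = rk x" by auto
      obtain y where y: "y < n" "rk y = Suc (rk x)" "\<not> tie y" using tie_succ[OF x(1,3)] by blast
      show "Suc k \<notin> rk ` {x \<in> ?S. tie x}"
      proof
        assume "Suc k \<in> rk ` {x \<in> ?S. tie x}"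
        then obtain z where z: "z < n" "tie z" "rk z = Suc k" by auto
        then have "z = y" using rk_inj y x by (auto simp: inj_on_def)
        then show False using z y by simp
      qed
    qed
    finally show ?thesis using False by simp
  qed
  ultimately show ?thesis using s1 sum_tri[of tau] by linarith
qed
end



lemma ceil_half: "nat \<lceil>real r / 2\<rceil> = (r + 1) div 2"
proof -
  have "\<lceil>real r / 2\<rceil> = int ((r + 1) div 2)"
  proof (cases "even r")
    case True
    then obtain q where "r = 2 * q" by blast
    then show ?thesis by simp
  next
    case False
    then obtain q where q: "r = 2 * q + 1" using oddE by blast
    have "real r / 2 = real q + 1/2" using q by simp
    then have "\<lceil>real r / 2\<rceil> = int q + 1" by (simp add: ceiling_eq_iff)
    then show ?thesis using q by simp
  qed
  then show ?thesis by simp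
qed

lemma arith_odd: "(2*q+3)^2 div 8 = ((q::nat)+1)*(q+2) div 2"
proof -
  have e: "(q+1)*(q+2) = 2 * ((q+1)*(q+2) div 2)" by simp
  have "(2*q+3)^2 = 4*((q+1)*(q+2)) + 1" by (simp add: power2_eq_square algebra_simps)
  also have "\<dots> = 8 * ((q+1)*(q+2) div 2) + 1" using e by linarith
  finally show ?thesis by simp
qed

lemma div8: "(8 * X + 4) div 8 = (X::nat)" by simp
lemma arith_even1: "(2*q+2)^2 div 8 = ((q::nat)+1)*(q+2) div 2 - (q+2) div 2"
proof (cases "even q")
  case True
  then obtain m where m: "q = 2*m" by blast
  have a: "(2*q+2)^2 = 8 * (2*m*m + 2*m) + 4" using m by (simp add: power2_eq_square algebra_simps)
  have L: "(2*q+2)^2 div 8 = 2*m*m + 2*m" unfolding a by (rule div8)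
  have b: "(q+1)*(q+2) = 2 * ((2*m*m + 2*m) + (m+1))" using m by (simp add: algebra_simps)
  have R1: "(q+1)*(q+2) div 2 = (2*m*m + 2*m) + (m+1)" using b by simp
  have R2: "(q + 2) div 2 = m + 1" using m by simp
  show ?thesis unfolding L R1 R2 by simp
next
  case False
  then obtain m where m: "q = 2*m+1" using oddE by blast
  have a: "(2*q+2)^2 = 8 * (2*m*m + 4*m + 2)" using m by (simp add: power2_eq_square algebra_simps)
  have L: "(2*q+2)^2 div 8 = 2*m*m + 4*m + 2" unfolding a by simp
  have b: "(q+1)*(q+2) = 2 * ((2*m*m + 4*m + 2) + (m+1))" using m by (simp add: algebra_simps)
  have R1: "(q+1)*(q+2) div 2 = (2*m*m + 4*m + 2) + (m+1)" using b by simp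
  have R2: "(q + 2) div 2 = m + 1" using m by simp
  show ?thesis unfolding L R1 R2 by simp
qed
lemma arith_even2: "(2*q+2)^2 div 8 = (q::nat)*(q+1) div 2 + (q+1) div 2"
proof (cases "even q")
  case True
  then obtain m where m: "q = 2*m" by blast
  have a: "(2*q+2)^2 = 8 * (2*m*m + 2*m) + 4" using m by (simp add: power2_eq_square algebra_simps)
  have L: "(2*q+2)^2 div 8 = 2*m*m + 2*m" unfolding a by (rule div8)
  have b: "q*(q+1) = 2 * (2*m*m + m)" using m by (simp add: algebra_simps)
  have R1: "q*(q+1) div 2 = 2*m*m + m" using b by simp
  have R2: "(q + 1) div 2 = m" using m by simp
  show ?thesis unfolding L R1 R2 by simp
next
  case False
  then obtain m where m: "q = 2*m+1" using oddE by blast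
  have a: "(2*q+2)^2 = 8 * (2*m*m + 4*m + 2)" using m by (simp add: power2_eq_square algebra_simps)
  have L: "(2*q+2)^2 div 8 = 2*m*m + 4*m + 2" unfolding a by simp
  have b: "q*(q+1) = 2 * (2*m*m + 3*m + 1)" using m by (simp add: algebra_simps)
  have R1: "q*(q+1) div 2 = 2*m*m + 3*m + 1" using b by simp
  have R2: "(q + 1) div 2 = m + 1" using m by simp
  show ?thesis unfolding L R1 R2 by simp
qed

lemma min_perc_eq:
  assumes lower: "\<And>A. percolating V adj r A \<Longrightarrow> f \<le> card A"
    and up1: "percolating V adj r A0" and up2: "card A0 \<le> f"
  shows "min_perc V adj r = f"
proof -
  have cA0: "card A0 = f" using lower[OF up1] up2 by simp
  show ?thesis unfolding min_perc_def
  proof (rule Least_equality)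
    show "\<exists>A. percolating V adj r A \<and> card A = f" using up1 cA0 by blast
  next
    fix k assume "\<exists>A. percolating V adj r A \<and> card A = k"
    then show "f \<le> k" using lower by blast
  qed
qed

lemma lower_bound:
  assumes p: "percolating (Kn_edges n) line_adj r A" and r1: "1 \<le> r" and ns: "(r + 1) div 2 + 2 \<le> n"
  shows "(r + 2)^2 div 8 \<le> card A"
proof -
  have A_sub: "A \<subseteq> Kn_edges n" and cl: "bp_closure (Kn_edges n) line_adj r A = Kn_edges n"
    using p by (auto simp: percolating_def)
  show ?thesis
  proof (cases "even r")
    case True
    then obtain q where rq: "r = 2 * q" by blast
    have L: "lb n r A (q + 1)"
      unfolding lb_def lb_axioms_def perc_setup_def using A_sub cl ns rq r1 by auto
    have "(q + 1) * (q + 1 + 1) div 2 - (if 2 * (q + 1) \<le> r + 1 then 0 else (q + 1 + 1) div 2) \<le> card A"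
      by (rule lb.lower_main[OF L])
    then have "(q + 1) * (q + 2) div 2 - (q + 2) div 2 \<le> card A" using rq by simp
    then show ?thesis using rq arith_even1[of q] by (simp add: add.commute)
  next
    case False
    then obtain q where rq: "r = 2 * q + 1" using oddE by blast
    have L: "lb n r A (q + 1)"
      unfolding lb_def lb_axioms_def perc_setup_def using A_sub cl ns rq by auto
    have "(q + 1) * (q + 1 + 1) div 2 - (if 2 * (q + 1) \<le> r + 1 then 0 else (q + 1 + 1) div 2) \<le> card A"
      by (rule lb.lower_main[OF L])
    then have b: "(q + 1) * (q + 2) div 2 \<le> card A" using rq by simp
    have e: "r + 2 = 2 * q + 3" using rq by simp
    have "(r + 2)^2 div 8 = (2 * q + 3)^2 div 8" by (simp only: e)
    also have "\<dots> = (q + 1) * (q + 2) div 2" by (rule arith_odd)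
    finally show ?thesis using b by simp
  qed
qed

lemma upper_bound:
  assumes r1: "1 \<le> r" and ns: "(r + 1) div 2 + 2 \<le> n"
  shows "\<exists>A. percolating (Kn_edges n) line_adj r A \<and> card A \<le> (r + 2)^2 div 8"
proof (cases "even r")
  case True
  then obtain q where rq: "r = 2 * q" by blast
  have q1: "1 \<le> q" using rq r1 by simp
  have qn: "q + 2 \<le> n" using ns rq by simp
  define c where "c = (if n \<le> 2 * q + 1 then n - q else q + 1)"
  have c2: "2 \<le> c" and sc: "q + c \<le> n" and cond: "n = q + c \<or> q + 1 \<le> c"
    using qn q1 unfolding c_def by auto
  have cl: "bp_closure (Kn_edges n) line_adj r (Aeven q c) = Kn_edges n"
    using upper_even[OF c2 sc cond] rq by simp
  have sub: "Aeven q c \<subseteq> Kn_edges n" using Aeven_sub[of c q n] c2 sc by simp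
  have "card (Aeven q c) \<le> q * (q + 1) div 2 + (q + 1) div 2" by (rule Aeven_card)
  also have "\<dots> = (r + 2)^2 div 8" using arith_even2[of q] rq by simp
  finally show ?thesis using cl sub unfolding percolating_def by blast
next
  case False
  then obtain q where rq: "r = 2 * q + 1" using oddE by blast
  have qn: "q + 3 \<le> n" using ns rq by simp
  define c where "c = (if n \<le> 2 * (q + 1) then n - (q + 1) else q + 1)"
  have c1: "1 \<le> c" and sc: "(q + 1) + c \<le> n" and cond: "n = (q + 1) + c \<or> q + 1 \<le> c"
    using qn unfolding c_def by auto
  have cl: "bp_closure (Kn_edges n) line_adj r (Aodd (q + 1) c) = Kn_edges n"
    using upper_odd[OF c1 sc cond] rq by simp
  have sub: "Aodd (q + 1) c \<subseteq> Kn_edges n" using Aodd_sub[of c "q + 1" n] c1 sc by simp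
  have "card (Aodd (q + 1) c) \<le> (q + 1) * (q + 1 + 1) div 2" by (rule Aodd_card)
  also have "\<dots> = (q + 1) * (q + 2) div 2" by simp
  also have "\<dots> = (2 * q + 3)^2 div 8" by (rule arith_odd[symmetric])
  also have "2 * q + 3 = r + 2" using rq by simp
  finally show ?thesis using cl sub unfolding percolating_def by blast
qed

lemma nbr_card:
  assumes e: "e \<in> Kn_edges n"
  shows "card {u \<in> Kn_edges n. line_adj e u} \<le> 2 * (n - 2)"
proof -
  obtain x y where xy: "x \<noteq> y" "x < n" "y < n" "e = {x,y}" using e by (auto simp: Kn_edges_iff)
  let ?D = "{0..<n} - {x,y}"
  have "{u \<in> Kn_edges n. line_adj e u} \<subseteq> (\<lambda>z. {x,z}) ` ?D \<union> (\<lambda>z. {y,z}) ` ?D"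
  proof
    fix u assume u: "u \<in> {u \<in> Kn_edges n. line_adj e u}"
    then obtain a b where ab: "a \<noteq> b" "a < n" "b < n" "u = {a,b}" by (auto simp: Kn_edges_iff)
    have ne: "u \<noteq> e" and int: "u \<inter> e \<noteq> {}" using u by (auto simp: line_adj_def)
    have "x \<in> u \<or> y \<in> u" using int xy by auto
    then consider "x = a" | "x = b" | "y = a" | "y = b" using ab by auto
    then show "u \<in> (\<lambda>z. {x,z}) ` ?D \<union> (\<lambda>z. {y,z}) ` ?D"
    proof cases
      case 1
      then have "b \<in> ?D" using ab ne xy by auto
      then show ?thesis using 1 ab by blast
    next
      case 2
      then have "a \<in> ?D" using ab ne xy by (auto simp: insert_commute)
      moreover have "u = {x, a}" using 2 ab by (simp add: insert_commute)
      ultimately show ?thesis by blast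
    next
      case 3
      then have "b \<in> ?D" using ab ne xy by (auto simp: insert_commute)
      then show ?thesis using 3 ab by blast
    next
      case 4
      then have "a \<in> ?D" using ab ne xy by auto
      moreover have "u = {y, a}" using 4 ab by (simp add: insert_commute)
      ultimately show ?thesis by blast
    qed
  qed
  then have "card {u \<in> Kn_edges n. line_adj e u} \<le> card ((\<lambda>z. {x,z}) ` ?D \<union> (\<lambda>z. {y,z}) ` ?D)"
    by (intro card_mono) auto
  also have "\<dots> \<le> card ((\<lambda>z. {x,z}) ` ?D) + card ((\<lambda>z. {y,z}) ` ?D)" by (rule card_Un_le)
  also have "\<dots> \<le> card ?D + card ?D" by (intro add_mono card_image_le) auto
  also have "card ?D = n - 2" using xy by (subst card_Diff_subset) auto
  finally show ?thesis by simp
qed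

lemma small_n:
  assumes ns: "n < (r + 1) div 2 + 2" and r1: "1 \<le> r"
  shows "min_perc (Kn_edges n) line_adj r = n choose 2"
proof -
  have lt: "2 * (n - 2) < r" using ns r1 by presburger
  have fix_step: "bp_step (Kn_edges n) line_adj r X = X" if "X \<subseteq> Kn_edges n" for X
  proof -
    have "\<And>v. v \<in> Kn_edges n \<Longrightarrow> card {u \<in> Kn_edges n. line_adj v u \<and> u \<in> X} < r"
    proof -
      fix v assume v: "v \<in> Kn_edges n"
      have "card {u \<in> Kn_edges n. line_adj v u \<and> u \<in> X} \<le> card {u \<in> Kn_edges n. line_adj v u}"
        by (intro card_mono) (auto intro: finite_subset[OF _ finite_Kn])
      then show "card {u \<in> Kn_edges n. line_adj v u \<and> u \<in> X} < r" using nbr_card[OF v] lt by linarith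
    qed
    then show ?thesis unfolding bp_step_def by (auto simp: not_le[symmetric])
  qed
  have stage_const: "stage n r X t = X" if "X \<subseteq> Kn_edges n" for X t
    using that by (induction t) (auto simp: stage_Suc fix_step)
  have clX: "bp_closure (Kn_edges n) line_adj r X = X" if "X \<subseteq> Kn_edges n" for X
    unfolding closure_stage using stage_const[OF that] by simp
  have cardV: "card (Kn_edges n) = n choose 2"
    unfolding Kn_edges_def using n_subsets[of "{0..<n}" 2] by simp
  have low: "n choose 2 \<le> card A" if "percolating (Kn_edges n) line_adj r A" for A
  proof -
    have "A = Kn_edges n" using clX that unfolding percolating_def by auto
    then show ?thesis using cardV by simp
  qed
  have P: "percolating (Kn_edges n) line_adj r (Kn_edges n)" using clX unfolding percolating_def by simp
  have C: "card (Kn_edges n) \<le> n choose 2" using cardV by simp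
  show ?thesis by (rule min_perc_eq[OF low P C])
qed

theorem theorem5p4:
  fixes n r :: nat
  assumes "n \<ge> 1" and "r \<ge> 1"
  shows "min_perc (Kn_edges n) line_adj r =
           (if n \<ge> nat \<lceil>real r / 2\<rceil> + 2 then (r + 2)^2 div 8 else n choose 2)"
proof (cases "n \<ge> nat \<lceil>real r / 2\<rceil> + 2")
  case True
  then have ns: "(r + 1) div 2 + 2 \<le> n" using ceil_half by simp
  obtain A0 where A0: "percolating (Kn_edges n) line_adj r A0" "card A0 \<le> (r + 2)^2 div 8"
    using upper_bound[OF assms(2) ns] by blast
  have "min_perc (Kn_edges n) line_adj r = (r + 2)^2 div 8"
    by (rule min_perc_eq[OF lower_bound[OF _ assms(2) ns] A0])
  then show ?thesis using True by simp
next
  case False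
  then have ns: "n < (r + 1) div 2 + 2" using ceil_half by simp
  show ?thesis using small_n[OF ns assms(2)] False by simp
qed


end
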